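(* Let $S = R\cup B$ be a finite set of points in the plane in general position (no three collinear), colored red ($R$) and blue ($B$). If the boundaries of the convex hulls $CH(R)$ and $CH(B)$ intersect each other, then $S$ contains a balanced convex $4$-hole.
   Context: A $4$-hole of $S$ is a simple quadrilateral with vertices in $S$ and no point of $S$ in its interior; it is convex if the quadrilateral is convex, and balanced if it has exactly two red and two blue vertices. $CH(X)$ denotes the convex hull of $X$. *)

theory Defs
  imports "HOL-Analysis.Analysis"
begin

type_synonym point = "real^2"

definition general_position :: "point set \<Rightarrow> bool" where
  "general_position S \<longleftrightarrow>
     (\<forall>a\<in>S. \<forall>b\<in>S. \<forall>c\<in>S. a \<noteq> b \<and> a \<noteq> c \<and> b \<noteq> c \<longrightarrow> \<not> collinear {a, b, c})"

text \<open>Four distinct points in convex position: no one lies in the convex hull of the others.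
  They are then the vertices of a convex quadrilateral, whose region is their convex hull.\<close>
definition convex_quadrilateral :: "point \<Rightarrow> point \<Rightarrow> point \<Rightarrow> point \<Rightarrow> bool" where
  "convex_quadrilateral a b c d \<longleftrightarrow>
     card {a, b, c, d} = 4 \<and>
     (\<forall>p\<in>{a, b, c, d}. p \<notin> convex hull ({a, b, c, d} - {p}))"

definition convex_4hole :: "point set \<Rightarrow> point \<Rightarrow> point \<Rightarrow> point \<Rightarrow> point \<Rightarrow> bool" where
  "convex_4hole S a b c d \<longleftrightarrow>
     {a, b, c, d} \<subseteq> S \<and> convex_quadrilateral a b c d \<and>
     S \<inter> interior (convex hull {a, b, c, d}) = {}"

definition balanced :: "point set \<Rightarrow> point set \<Rightarrow> point \<Rightarrow> point \<Rightarrow> point \<Rightarrow> point \<Rightarrow> bool" where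
  "balanced R B a b c d \<longleftrightarrow> card ({a, b, c, d} \<inter> R) = 2 \<and> card ({a, b, c, d} \<inter> B) = 2"

end

theory Submission
  imports Defs
begin
definition D :: "point \<Rightarrow> point \<Rightarrow> point \<Rightarrow> real" where
  "D a b c = (b$1 - a$1) * (c$2 - a$2) - (b$2 - a$2) * (c$1 - a$1)"

lemma D_aff: "D a b (x + t *\<^sub>R (y - x)) = D a b x + t * (D a b y - D a b x)"
  by (simp add: D_def algebra_simps)
lemma D_aff2: "D a b ((1 - t) *\<^sub>R x + t *\<^sub>R y) = (1 - t) * D a b x + t * D a b y"
  by (simp add: D_def algebra_simps)
lemma D_triv[simp]: "D a a c = 0" "D a b a = 0" "D a b b = 0"
  by (simp_all add: D_def)
lemma D_swap: "D b a c = - D a b c" by (simp add: D_def algebra_simps)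
lemma D_cyc: "D b c a = D a b c" by (simp add: D_def algebra_simps)
lemma D_four: "D b c d - D a c d + D a b d - D a b c = 0" by (simp add: D_def algebra_simps)

lemma line_param:
  assumes "D a b z = 0" "a \<noteq> b"
  shows "\<exists>t. z = a + t *\<^sub>R (b - a)"
proof -
  have ab: "a$1 \<noteq> b$1 \<or> a$2 \<noteq> b$2" using assms(2) by (auto simp: vec_eq_iff forall_2)
  show ?thesis
  proof (cases "a$1 = b$1")
    case False
    define t where "t = (z$1 - a$1) / (b$1 - a$1)"
    have ne: "b$1 - a$1 \<noteq> 0" using False by simp
    have e0: "(b$1 - a$1) * (z$2 - a$2) = (b$2 - a$2) * (z$1 - a$1)" using assms(1) by (simp add: D_def)
    have e1: "t * (b$1 - a$1) = z$1 - a$1" using ne by (simp add: t_def)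
    have e2: "t * (b$2 - a$2) = z$2 - a$2"
    proof -
      have "t * (b$2 - a$2) * (b$1 - a$1) = (z$2 - a$2) * (b$1 - a$1)"
      proof -
        have "t * (b$2 - a$2) * (b$1 - a$1) = (t * (b$1 - a$1)) * (b$2 - a$2)" by (simp only: mult_ac)
        also have "\<dots> = (b$2 - a$2) * (z$1 - a$1)" using e1 by (simp only: mult_ac)
        also have "\<dots> = (z$2 - a$2) * (b$1 - a$1)" using e0 by (simp only: mult_ac)
        finally show ?thesis .
      qed
      then show ?thesis using ne by simp
    qed
    have "z = a + t *\<^sub>R (b - a)"
      using e1 e2 unfolding vec_eq_iff forall_2 by (simp add: algebra_simps)
    then show ?thesis by blast
  next
    case True
    then have ne: "a$2 \<noteq> b$2" using ab by simp
    define t where "t = (z$2 - a$2) / (b$2 - a$2)"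
    have ne': "b$2 - a$2 \<noteq> 0" using ne by simp
    have e0: "(b$1 - a$1) * (z$2 - a$2) = (b$2 - a$2) * (z$1 - a$1)" using assms(1) by (simp add: D_def)
    have e2: "t * (b$2 - a$2) = z$2 - a$2" using ne' by (simp add: t_def)
    have e1: "t * (b$1 - a$1) = z$1 - a$1"
    proof -
      have "(b$2 - a$2) * (z$1 - a$1) = 0" using e0 True by simp
      then have "z$1 - a$1 = 0" using ne' by simp
      then show ?thesis using True by simp
    qed
    have "z = a + t *\<^sub>R (b - a)"
      using e1 e2 unfolding vec_eq_iff forall_2 by (simp add: algebra_simps)
    then show ?thesis by blast
  qed
qed

lemma D_collinear:
  assumes "D a b c = 0" shows "collinear {a, b, c}"
proof (cases "a = b")
  case True then show ?thesis by (simp add: collinear_2)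
next
  case False
  then obtain t where t: "c = a + t *\<^sub>R (b - a)" using line_param assms by blast
  show ?thesis unfolding collinear_alt
    apply (rule exI[of _ a], rule exI[of _ "b - a"])
    using t by (auto intro: exI[of _ 0] exI[of _ 1] exI[of _ t])
qed

lemma D_swap23: "D a c b = - D a b c" by (simp add: D_def algebra_simps)

definition cr :: "point \<Rightarrow> point \<Rightarrow> point \<Rightarrow> point \<Rightarrow> bool" where
  "cr a b c d \<longleftrightarrow> D a b c * D a b d < 0 \<and> D c d a * D c d b < 0"

lemma cr_sym1: "cr a b c d \<Longrightarrow> cr b a c d"
  by (simp add: cr_def D_swap[of b a] mult.commute)
lemma cr_sym2: "cr a b c d \<Longrightarrow> cr a b d c"
  by (simp add: cr_def D_swap[of d c] mult.commute)
lemma cr_sym3: "cr a b c d \<Longrightarrow> cr c d a b"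
  by (simp add: cr_def)

lemma cr_distinct: assumes "cr a b c d"
  shows "a \<noteq> b" "c \<noteq> d" "a \<noteq> c" "a \<noteq> d" "b \<noteq> c" "b \<noteq> d"
  using assms by (auto simp: cr_def)

lemma cr_edge: assumes "cr a b c d" shows "0 < D a c b * D a c d"
proof -
  have i: "D c d b - D c d a + D a b d - D a b c = 0"
    using D_four[of b c d a] by (simp add: D_cyc)
  have "D a c b = - D a b c" by (rule D_swap23)
  moreover have "D a c d = D c d a" by (simp add: D_cyc)
  moreover have "D a b c * D a b d < 0" "D c d a * D c d b < 0" using assms by (auto simp: cr_def)
  ultimately show ?thesis using i
    by (auto simp: mult_less_0_iff zero_less_mult_iff)
qed

lemma convex_Dhalf: "convex {y. 0 \<le> k * D e f y}"
  unfolding convex_alt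
proof (intro ballI allI impI, clarsimp)
  fix x y and u :: real
  assume "0 \<le> k * D e f x" "0 \<le> k * D e f y" "0 \<le> u" "u \<le> 1"
  then have "0 \<le> (1 - u) * (k * D e f x) + u * (k * D e f y)"
    by (simp add: mult_nonneg_nonneg)
  then show "0 \<le> k * D e f ((1 - u) *\<^sub>R x + u *\<^sub>R y)"
    by (simp only: D_aff2 distrib_left mult.left_commute[of k])
qed

lemma cr_hull: assumes "cr a b c d"
  shows "convex hull {a, b, c, d} \<subseteq> {y. 0 \<le> D a c b * D a c y}"
  apply (rule hull_minimal)
  using cr_edge[OF assms] convex_Dhalf by auto

definition nrm :: "point \<Rightarrow> point \<Rightarrow> point" where
  "nrm a b = vector [a$2 - b$2, b$1 - a$1]"

lemma D_inner: "D a b y = inner (nrm a b) y - inner (nrm a b) a"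
  by (simp add: D_def nrm_def inner_vec_def sum_2 algebra_simps)

lemma nrm_nz: "a \<noteq> b \<Longrightarrow> nrm a b \<noteq> 0"
  by (auto simp: nrm_def vec_eq_iff forall_2)

lemma interior_Dhalf: assumes "k \<noteq> 0" "e \<noteq> f"
  shows "interior {y. 0 \<le> k * D e f y} \<subseteq> {y. 0 < k * D e f y}"
proof -
  have eq: "\<And>y. k * D e f y = inner (k *\<^sub>R nrm e f) y - k * inner (nrm e f) e"
    by (simp add: D_inner algebra_simps)
  have nz: "k *\<^sub>R nrm e f \<noteq> 0" using assms nrm_nz by simp
  have "{y. 0 \<le> k * D e f y} = {y. inner (k *\<^sub>R nrm e f) y \<ge> k * inner (nrm e f) e}"
    by (auto simp: eq)
  moreover have "{y. 0 < k * D e f y} = {y. inner (k *\<^sub>R nrm e f) y > k * inner (nrm e f) e}"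
    by (auto simp: eq)
  ultimately show ?thesis using interior_halfspace_ge[OF nz] by simp
qed

lemma cr_vertex: assumes "cr a b c d" shows "a \<notin> interior (convex hull {a, b, c, d})"
proof
  assume "a \<in> interior (convex hull {a, b, c, d})"
  then have "a \<in> interior {y. 0 \<le> D a c b * D a c y}"
    using interior_mono[OF cr_hull[OF assms]] by blast
  moreover have "D a c b \<noteq> 0" using cr_edge[OF assms] by auto
  ultimately have "a \<in> {y. 0 < D a c b * D a c y}"
    using interior_Dhalf cr_distinct[OF assms] by blast
  then show False by simp
qed

lemma cr_vertices: assumes "cr a b c d"
  shows "{a, b, c, d} \<inter> interior (convex hull {a, b, c, d}) = {}"
proof -
  have "b \<notin> interior (convex hull {b, a, c, d})" by (rule cr_vertex[OF cr_sym1[OF assms]])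
  moreover have "c \<notin> interior (convex hull {c, d, a, b})" by (rule cr_vertex[OF cr_sym3[OF assms]])
  moreover have "d \<notin> interior (convex hull {d, c, a, b})"
    by (rule cr_vertex[OF cr_sym1[OF cr_sym3[OF assms]]])
  moreover have "{b, a, c, d} = {a, b, c, d}" "{c, d, a, b} = {a, b, c, d}" "{d, c, a, b} = {a, b, c, d}"
    by auto
  ultimately show ?thesis using cr_vertex[OF assms] by auto
qed

lemma sign_comb_pos:
  fixes X Y t :: real
  assumes "0 < X" "0 < Y" "0 \<le> t" "t \<le> 1"
  shows "0 < (1 - t) * X + t * Y"
  using assms by (cases "t = 1") (auto intro: add_pos_nonneg add_nonneg_pos mult_pos_pos mult_nonneg_nonneg)

lemma sign_comb:
  fixes X Y t :: real
  assumes "0 < X * Y" "0 \<le> t" "t \<le> 1"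
  shows "X + t * (Y - X) \<noteq> 0"
proof -
  have e: "X + t * (Y - X) = (1 - t) * X + t * Y" by (simp add: algebra_simps)
  have "(0 < X \<and> 0 < Y) \<or> (0 < - X \<and> 0 < - Y)" using assms(1) by (auto simp: zero_less_mult_iff)
  then show ?thesis
  proof
    assume "0 < X \<and> 0 < Y" then show ?thesis using sign_comb_pos[of X Y t] assms e by simp
  next
    assume "0 < - X \<and> 0 < - Y"
    then have "0 < (1 - t) * (-X) + t * (-Y)" using sign_comb_pos[of "-X" "-Y" t] assms by simp
    then show ?thesis using e by (simp add: algebra_simps)
  qed
qed

lemma cr_core:
  assumes cr: "cr a b c d" and pin: "p \<in> convex hull {a, b, c, d}"
    and pa: "0 < D c d p * D c d a" and X: "D p b c \<noteq> 0" and Y: "D p b d \<noteq> 0"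
  shows "cr p b c d"
proof -
  have h: "D c d a * D c d b < 0" using cr by (simp add: cr_def)
  have pb: "D c d p * D c d b < 0"
    using pa h by (auto simp: mult_less_0_iff zero_less_mult_iff)
  have "D p b c * D p b d < 0"
  proof (rule ccontr)
    assume "\<not> D p b c * D p b d < 0"
    then have XY: "0 < D p b c * D p b d" using X Y
      by (metis linorder_neqE_linordered_idom mult_eq_0_iff)
    define s where "s = D c d p / (D c d p - D c d b)"
    have den: "D c d p - D c d b \<noteq> 0" using pb by auto
    have s01: "0 \<le> s" "s \<le> 1" using pb unfolding s_def
      by (auto simp: mult_less_0_iff divide_simps)
    define z where "z = p + s *\<^sub>R (b - p)"
    have gz: "D c d z = 0" unfolding z_def D_aff s_def using den
      by (simp add: field_simps)
    have bin: "b \<in> convex hull {a, b, c, d}" by (simp add: hull_inc)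
    have "(1 - s) *\<^sub>R p + s *\<^sub>R b \<in> convex hull {a, b, c, d}"
      using convex_convex_hull[of "{a,b,c,d}"] pin bin s01 unfolding convex_alt by blast
    moreover have "(1 - s) *\<^sub>R p + s *\<^sub>R b = z" unfolding z_def by (simp add: algebra_simps)
    ultimately have zin: "z \<in> convex hull {a, b, c, d}" by simp
    obtain t where t: "z = c + t *\<^sub>R (d - c)" using line_param[OF gz cr_distinct(2)[OF cr]] by blast
    have e1: "0 \<le> D a c b * D a c z" using cr_hull[OF cr] zin by blast
    have "D a c z = t * D a c d" unfolding t D_aff by simp
    moreover have "0 < D a c b * D a c d" by (rule cr_edge[OF cr])
    ultimately have t0: "0 \<le> t" using e1
      by (auto simp: zero_le_mult_iff zero_less_mult_iff mult_le_0_iff)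
    have cr2: "cr a b d c" by (rule cr_sym2[OF cr])
    have "{a, b, d, c} = {a, b, c, d}" by auto
    then have e2: "0 \<le> D a d b * D a d z" using cr_hull[OF cr2] zin by auto
    have "D a d z = (1 - t) * D a d c" unfolding t D_aff by (simp add: algebra_simps)
    moreover have "0 < D a d b * D a d c" by (rule cr_edge[OF cr2])
    ultimately have t1: "0 \<le> 1 - t" using e2
      by (auto simp: zero_le_mult_iff zero_less_mult_iff mult_le_0_iff)
    have "D p b z = 0" unfolding z_def D_aff by simp
    moreover have "D p b z = D p b c + t * (D p b d - D p b c)" unfolding t D_aff by simp
    ultimately show False using sign_comb[OF XY t0] t1 by simp
  qed
  then show ?thesis using pb by (simp add: cr_def)
qed

lemma gp_D: assumes "general_position S" "x \<in> S" "y \<in> S" "z \<in> S" "x \<noteq> y" "x \<noteq> z" "y \<noteq> z"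
  shows "D x y z \<noteq> 0"
  using assms D_collinear unfolding general_position_def by blast

lemma key:
  assumes gp: "general_position S" and cr: "cr a b c d" and sub: "{a, b, c, d} \<subseteq> S"
    and pS: "p \<in> S" and pint: "p \<in> interior (convex hull {a, b, c, d})"
  shows "cr p b c d \<or> cr a p c d"
proof -
  have pn: "p \<noteq> a" "p \<noteq> b" "p \<noteq> c" "p \<noteq> d" using cr_vertices[OF cr] pint by auto
  note ds = cr_distinct[OF cr]
  have pin: "p \<in> convex hull {a, b, c, d}" using pint interior_subset by blast
  have g: "D c d p \<noteq> 0" using gp_D[OF gp, of c d p] sub pS pn ds by auto
  have h: "D c d a * D c d b < 0" using cr by (simp add: cr_def)
  show ?thesis
  proof (cases "0 < D c d p * D c d a")
    case True
    have "D p b c \<noteq> 0" "D p b d \<noteq> 0" using gp_D[OF gp] sub pS pn ds by auto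
    then show ?thesis using cr_core[OF cr pin True] by simp
  next
    case False
    then have pbb: "0 < D c d p * D c d b" using g h
      by (auto simp: mult_less_0_iff zero_less_mult_iff)
    have "{b, a, c, d} = {a, b, c, d}" by auto
    then have pin': "p \<in> convex hull {b, a, c, d}" using pin by simp
    have "D p a c \<noteq> 0" "D p a d \<noteq> 0" using gp_D[OF gp] sub pS pn ds by auto
    then have "cr p a c d" using cr_core[OF cr_sym1[OF cr] pin' pbb] by simp
    then show ?thesis using cr_sym1 by blast
  qed
qed

lemma decrease:
  assumes "finite S" "Q' \<subseteq> convex hull Q" "p \<in> Q'" "p \<in> S" "p \<in> interior (convex hull Q)"
    "Q' \<inter> interior (convex hull Q') = {}"
  shows "card (S \<inter> interior (convex hull Q')) < card (S \<inter> interior (convex hull Q))"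
proof -
  have "convex hull Q' \<subseteq> convex hull Q"
    using assms(2) by (simp add: convex_hull_subset)
  then have "interior (convex hull Q') \<subseteq> interior (convex hull Q)" by (rule interior_mono)
  then have "S \<inter> interior (convex hull Q') \<subset> S \<inter> interior (convex hull Q)"
    using assms by blast
  then show ?thesis using assms(1) by (simp add: psubset_card_mono)
qed

lemma tri_excl: assumes "D e f y * D e f x < 0" shows "x \<notin> convex hull {y, e, f}"
proof
  assume "x \<in> convex hull {y, e, f}"
  moreover have "convex hull {y, e, f} \<subseteq> {z. 0 \<le> D e f y * D e f z}"
    by (rule hull_minimal) (auto simp: convex_Dhalf)
  ultimately show False using assms by auto
qed

lemma cr_quad: assumes cr: "cr a b c d" shows "convex_quadrilateral a b c d"
proof -
  note ds = cr_distinct[OF cr]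
  have h1: "D a b c * D a b d < 0" and h2: "D c d a * D c d b < 0" using cr by (auto simp: cr_def)
  have "a \<notin> convex hull {b, c, d}" using tri_excl[of c d b a] h2 by (simp add: mult.commute)
  moreover have "b \<notin> convex hull {a, c, d}" using tri_excl[of c d a b] h2 by simp
  moreover have "c \<notin> convex hull {d, a, b}" using tri_excl[of a b d c] h1 by (simp add: mult.commute)
  moreover have "d \<notin> convex hull {c, a, b}" using tri_excl[of a b c d] h1 by simp
  moreover have "{d, a, b} = {a, b, d}" "{c, a, b} = {a, b, c}" by auto
  moreover have "{a, b, c, d} - {a} = {b, c, d}" "{a, b, c, d} - {b} = {a, c, d}"
    "{a, b, c, d} - {c} = {a, b, d}" "{a, b, c, d} - {d} = {a, b, c}" using ds by auto
  moreover have "card {a, b, c, d} = 4" using ds by auto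
  ultimately show ?thesis unfolding convex_quadrilateral_def by auto
qed

lemma hole_from_cr:
  assumes fR: "finite R" and fB: "finite B" and disj: "R \<inter> B = {}" and gp: "general_position (R \<union> B)"
    and ex: "a0 \<in> R" "b0 \<in> R" "c0 \<in> B" "d0 \<in> B" "cr a0 b0 c0 d0"
  shows "\<exists>a b c d. convex_4hole (R \<union> B) a b c d \<and> balanced R B a b c d"
proof -
  define S where "S = R \<union> B"
  have fS: "finite S" using fR fB S_def by simp
  define P where "P = (\<lambda>(a, b, c, d). a \<in> R \<and> b \<in> R \<and> c \<in> B \<and> d \<in> B \<and> cr a b c d)"
  define m where "m = (\<lambda>(a, b, c, d). card (S \<inter> interior (convex hull {a, b, c, d})))"
  have "P (a0, b0, c0, d0)" using ex by (simp add: P_def)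
  then obtain x where Px: "P x" and mn: "\<forall>y. P y \<longrightarrow> m x \<le> m y"
    using ex_has_least_nat[of P _ m] by blast
  obtain a b c d where x: "x = (a, b, c, d)" by (cases x) auto
  have abcd: "a \<in> R" "b \<in> R" "c \<in> B" "d \<in> B" and cr: "cr a b c d" using Px x by (auto simp: P_def)
  have sub: "{a, b, c, d} \<subseteq> S" using abcd S_def by auto
  have gpS: "general_position S" using gp S_def by simp
  have hin: "{a, b, c, d} \<subseteq> convex hull {a, b, c, d}" by (rule hull_subset)
  have empty: "S \<inter> interior (convex hull {a, b, c, d}) = {}"
  proof (rule ccontr)
    assume "S \<inter> interior (convex hull {a, b, c, d}) \<noteq> {}"
    then obtain p where pS: "p \<in> S" and pint: "p \<in> interior (convex hull {a, b, c, d})" by blast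
    have pin: "p \<in> convex hull {a, b, c, d}" using pint interior_subset by blast
    have mx: "m x = card (S \<inter> interior (convex hull {a, b, c, d}))" using x m_def by simp
    show False
    proof (cases "p \<in> R")
      case True
      from key[OF gpS cr sub pS pint] show False
      proof
        assume c1: "cr p b c d"
        have "P (p, b, c, d)" using True abcd c1 by (simp add: P_def)
        moreover have "card (S \<inter> interior (convex hull {p, b, c, d})) < m x"
          unfolding mx by (rule decrease[OF fS _ _ pS pint cr_vertices[OF c1]]) (use hin pin in auto)
        ultimately show False using mn m_def by fastforce
      next
        assume c1: "cr a p c d"
        have "P (a, p, c, d)" using True abcd c1 by (simp add: P_def)
        moreover have "card (S \<inter> interior (convex hull {a, p, c, d})) < m x"
          unfolding mx by (rule decrease[OF fS _ _ pS pint cr_vertices[OF c1]]) (use hin pin in auto)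
        ultimately show False using mn m_def by fastforce
      qed
    next
      case False
      then have pB: "p \<in> B" using pS S_def by auto
      have "{c, d, a, b} = {a, b, c, d}" by auto
      then have pint': "p \<in> interior (convex hull {c, d, a, b})" using pint by simp
      have sub': "{c, d, a, b} \<subseteq> S" using sub by auto
      from key[OF gpS cr_sym3[OF cr] sub' pS pint'] show False
      proof
        assume "cr p d a b"
        then have c1: "cr a b p d" by (rule cr_sym3)
        have "P (a, b, p, d)" using pB abcd c1 by (simp add: P_def)
        moreover have "card (S \<inter> interior (convex hull {a, b, p, d})) < m x"
          unfolding mx by (rule decrease[OF fS _ _ pS pint cr_vertices[OF c1]]) (use hin pin in auto)
        ultimately show False using mn m_def by fastforce
      next
        assume "cr c p a b"
        then have c1: "cr a b c p" by (rule cr_sym3)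
        have "P (a, b, c, p)" using pB abcd c1 by (simp add: P_def)
        moreover have "card (S \<inter> interior (convex hull {a, b, c, p})) < m x"
          unfolding mx by (rule decrease[OF fS _ _ pS pint cr_vertices[OF c1]]) (use hin pin in auto)
        ultimately show False using mn m_def by fastforce
      qed
    qed
  qed
  have "convex_4hole (R \<union> B) a b c d"
    unfolding convex_4hole_def using sub empty cr_quad[OF cr] S_def by simp
  moreover have "{a, b, c, d} \<inter> R = {a, b}" "{a, b, c, d} \<inter> B = {c, d}"
    using abcd disj by auto
  then have "balanced R B a b c d" using cr_distinct[OF cr] by (simp add: balanced_def)
  ultimately show ?thesis by blast
qed

lemma seg_sign:
  assumes "x = (1 - s) *\<^sub>R a + s *\<^sub>R b" "0 \<le> s" "s \<le> 1" "D e f x = 0" "D e f a \<noteq> 0" "D e f b \<noteq> 0"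
  shows "D e f a * D e f b < 0"
proof (rule ccontr)
  assume "\<not> ?thesis"
  then have "0 < D e f a * D e f b" using assms(5,6)
    by (metis linorder_neqE_linordered_idom mult_eq_0_iff)
  from sign_comb[OF this assms(2,3)] have "D e f a + s * (D e f b - D e f a) \<noteq> 0" .
  moreover have "D e f x = D e f a + s * (D e f b - D e f a)"
    unfolding assms(1) D_aff2 by (simp add: algebra_simps)
  ultimately show False using assms(4) by simp
qed

lemma seg_D0: "x \<in> closed_segment c d \<Longrightarrow> D c d x = 0"
  by (auto simp: in_segment D_aff2)

lemma cross_cr:
  assumes gp: "general_position (R \<union> B)" and disj: "R \<inter> B = {}"
    and ab: "a \<in> R" "b \<in> R" and cd: "c \<in> B" "d \<in> B"
    and x1: "x \<in> closed_segment a b" and x2: "x \<in> closed_segment c d"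
  shows "cr a b c d"
proof -
  have ne: "a \<noteq> c" "a \<noteq> d" "b \<noteq> c" "b \<noteq> d" using ab cd disj by auto
  have g1: "D c d x = 0" using seg_D0[OF x2] .
  have g2: "D a b x = 0" using seg_D0[OF x1] .
  have anb: "a \<noteq> b"
  proof
    assume "a = b"
    then have xa: "x = a" using x1 by simp
    show False
    proof (cases "c = d")
      case True then have "x = c" using x2 by simp
      then show False using xa ne by simp
    next
      case False
      then have "D c d a \<noteq> 0" using gp_D[OF gp, of c d a] ab cd ne by auto
      then show False using g1 xa by simp
    qed
  qed
  have cnd: "c \<noteq> d"
  proof
    assume "c = d"
    then have xc: "x = c" using x2 by simp
    have "D a b c \<noteq> 0" using gp_D[OF gp, of a b c] ab cd ne anb by auto
    then show False using g2 xc by simp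
  qed
  obtain s where s: "0 \<le> s" "s \<le> 1" "x = (1 - s) *\<^sub>R a + s *\<^sub>R b" using x1 by (auto simp: in_segment)
  obtain t where t: "0 \<le> t" "t \<le> 1" "x = (1 - t) *\<^sub>R c + t *\<^sub>R d" using x2 by (auto simp: in_segment)
  have "D c d a * D c d b < 0"
    using seg_sign[OF s(3) s(1,2) g1] gp_D[OF gp] ab cd ne cnd by auto
  moreover have "D a b c * D a b d < 0"
    using seg_sign[OF t(3) t(1,2) g2] gp_D[OF gp] ab cd ne anb by auto
  ultimately show ?thesis by (simp add: cr_def)
qed

lemma boundary_seg:
  assumes fR: "finite R" and gp: "general_position S" and RS: "R \<subseteq> S"
    and xf: "x \<in> frontier (convex hull R)"
  shows "\<exists>a\<in>R. \<exists>b\<in>R. x \<in> closed_segment a b"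
proof -
  have cl: "closed (convex hull R)"
    using fR by (simp add: compact_imp_closed compact_convex_hull finite_imp_compact)
  have xR: "x \<in> convex hull R" and xni: "x \<notin> interior (convex hull R)"
    using xf cl by (auto simp: frontier_def)
  obtain T where T: "finite T" "T \<subseteq> R" "card T \<le> 3" "x \<in> convex hull T"
    using xR caratheodory[of R] by auto
  have "card T = 0 \<or> card T = 1 \<or> card T = 2 \<or> card T = 3" using T(3) by linarith
  then show ?thesis
  proof (elim disjE)
    assume "card T = 0" then have "T = {}" using T(1) by simp
    then show ?thesis using T(4) by simp
  next
    assume "card T = 1" then obtain a where "T = {a}" by (auto simp: card_Suc_eq)
    then show ?thesis using T by auto
  next
    assume "card T = 2" then obtain a b where "T = {a, b}" by (auto simp: card_2_iff)
    then show ?thesis using T by (auto simp: segment_convex_hull)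
  next
    assume c3: "card T = 3"
    then obtain a b c where Tabc: "T = {a, b, c}" and ds: "a \<noteq> b" "a \<noteq> c" "b \<noteq> c"
      by (auto simp: card_Suc_eq numeral_3_eq_3)
    obtain u v w where uvw: "0 \<le> u" "0 \<le> v" "0 \<le> w" "u + v + w = 1"
      and xe: "x = u *\<^sub>R a + v *\<^sub>R b + w *\<^sub>R c"
      using T(4) unfolding Tabc convex_hull_3 by blast
    have abcS: "a \<in> S" "b \<in> S" "c \<in> S" using Tabc T(2) RS by auto
    show ?thesis
    proof (cases "u = 0 \<or> v = 0 \<or> w = 0")
      case True
      then show ?thesis
      proof (elim disjE)
        assume z: "u = 0"
        have e: "1 - w = v" using uvw z by linarith
        have "x = (1 - w) *\<^sub>R b + w *\<^sub>R c" "w \<le> 1" using xe uvw z e by auto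
        then have "x \<in> closed_segment b c" using uvw by (auto simp: in_segment)
        then show ?thesis using Tabc T(2) by auto
      next
        assume z: "v = 0"
        have e: "1 - w = u" using uvw z by linarith
        have "x = (1 - w) *\<^sub>R a + w *\<^sub>R c" "w \<le> 1" using xe uvw z e by auto
        then have "x \<in> closed_segment a c" using uvw by (auto simp: in_segment)
        then show ?thesis using Tabc T(2) by auto
      next
        assume z: "w = 0"
        have e: "1 - v = u" using uvw z by linarith
        have "x = (1 - v) *\<^sub>R a + v *\<^sub>R b" "v \<le> 1" using xe uvw z e by auto
        then have "x \<in> closed_segment a b" using uvw by (auto simp: in_segment)
        then show ?thesis using Tabc T(2) by auto
      qed
    next
      case False
      have "\<not> collinear {a, b, c}" using gp abcS ds unfolding general_position_def by blast
      then have nad: "\<not> affine_dependent T" using Tabc ds by (simp add: collinear_3_eq_affine_dependent)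
      define f where "f = (\<lambda>y. if y = a then u else if y = b then v else w)"
      have "x \<in> interior (convex hull T)"
        unfolding interior_convex_hull_explicit_minimal[OF nad] using c3
        apply simp
        apply (rule exI[of _ f])
        using False uvw ds xe unfolding Tabc f_def by (auto simp: add.assoc)
      moreover have "interior (convex hull T) \<subseteq> interior (convex hull R)"
        by (rule interior_mono, rule hull_mono, rule T(2))
      ultimately show ?thesis using xni by blast
    qed
  qed
qed

theorem lemma5:
  fixes R B :: "point set"
  assumes "finite R" and "finite B" and "R \<inter> B = {}"
    and "general_position (R \<union> B)"
    and "frontier (convex hull R) \<inter> frontier (convex hull B) \<noteq> {}"
  shows "\<exists>a b c d. convex_4hole (R \<union> B) a b c d \<and> balanced R B a b c d"
proof -
  obtain x where xR: "x \<in> frontier (convex hull R)" and xB: "x \<in> frontier (convex hull B)"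
    using assms(5) by blast
  obtain a b where ab: "a \<in> R" "b \<in> R" "x \<in> closed_segment a b"
    using boundary_seg[OF assms(1) assms(4) _ xR] by blast
  obtain c d where cd: "c \<in> B" "d \<in> B" "x \<in> closed_segment c d"
    using boundary_seg[OF assms(2) assms(4) _ xB] by blast
  have "cr a b c d" by (rule cross_cr[OF assms(4) assms(3) ab(1,2) cd(1,2) ab(3) cd(3)])
  then show ?thesis using hole_from_cr[OF assms(1-4) ab(1,2) cd(1,2)] by blast
qed
end
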